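(* Consider the finite game with players $\mathcal{M}=\{1,\dots,M\}$, common action set $\mathcal{N}$ and costs $c_i(\mathbf{a}) = \frac{\sigma^2}{h_{ia_i}}\,\frac{\beta_i}{[1-\sum_{l\in\mathcal{M}_{a_i}(\mathbf{a})}\beta_l]^+}$, and suppose $h_{ij}=h_j$ and $\beta_i=\beta$ for all $i\in\mathcal{M}$, $j\in\mathcal{N}$. Then the steady states of MAPC$^\ast$ are the Pareto efficient Nash equilibria of the game.
   Context: Uplink cellular model: mobiles $\mathcal{M}=\{1,\dots,M\}$, BSs $\mathcal{N}=\{1,\dots,N\}$, power gains $h_{ij}>0$, noise power $\sigma^2>0$, target SINRs $\gamma_i>0$, $\beta_i=\gamma_i/(1+\gamma_i)$. Association profile $\mathbf{a}\in\mathcal{N}^M$, $\mathcal{M}_j(\mathbf{a})=\{l: a_l=j\}$, $[x]^+=\max(x,0)$, positive$/0=+\infty$; $(b,\mathbf{a}_{-i})$ replaces $a_i$ by $b$. Algorithm MAPC$^\ast$: at times $t=0,1,2,\dots$, mobile $i=1+(t\bmod M)$ changes its association at $t+1$ iff $a_i(t)\notin\arg\min_{j\in\mathcal{N}}\big(c_i(j,\mathbf{a}(t)_{-i}),\ \sum_{l\in\mathcal{M}_j((j,\mathbf{a}(t)_{-i}))}\beta_l\big)$ (lexicographic minimization), in which case $a_i(t+1)$ is chosen from this argmin. A steady state of MAPC$^\ast$ is a profile from which no mobile ever changes its association. $\mathbf{a}$ is a Nash equilibrium if $a_i\in\arg\min_{b\in\mathcal{N}}c_i(b,\mathbf{a}_{-i})$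 for all $i$. $\mathbf{a}$ is Pareto dominated by $\mathbf{a}'$ if $c_i(\mathbf{a}')\le c_i(\mathbf{a})$ for all $i$ with strict inequality for some $i$; $\mathbf{a}$ is Pareto efficient if no profile Pareto dominates it. Standing assumption: there exists at least one feasible association, i.e. some $\mathbf{a}$ with $\sum_{l\in\mathcal{M}_j(\mathbf{a})}\beta_l<1$ for all $j$. *)

theory Defs
  imports Complex_Main "HOL-Library.Extended_Real"
begin

text \<open>Mobiles are indexed 0..M-1 (paper: 1..M), base stations 0..N-1 (paper: 1..N).
  An association profile is a function nat => nat, fixed to 0 outside the mobiles.\<close>

definition beta_of :: "(nat \<Rightarrow> real) \<Rightarrow> nat \<Rightarrow> real" where
  "beta_of \<gamma> i = \<gamma> i / (1 + \<gamma> i)"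

definition profiles :: "nat \<Rightarrow> nat \<Rightarrow> (nat \<Rightarrow> nat) set" where
  "profiles M N = {a. (\<forall>i<M. a i < N) \<and> (\<forall>i. M \<le> i \<longrightarrow> a i = 0)}"

definition load :: "(nat \<Rightarrow> real) \<Rightarrow> nat \<Rightarrow> (nat \<Rightarrow> nat) \<Rightarrow> nat \<Rightarrow> real" where
  "load \<beta> M a j = (\<Sum>l\<in>{l. l < M \<and> a l = j}. \<beta> l)"

definition cost :: "(nat \<Rightarrow> nat \<Rightarrow> real) \<Rightarrow> real \<Rightarrow> (nat \<Rightarrow> real) \<Rightarrow> nat
                     \<Rightarrow> (nat \<Rightarrow> nat) \<Rightarrow> nat \<Rightarrow> ereal" where
  "cost h \<sigma>2 \<beta> M a i =
     (let S = load \<beta> M a (a i) in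
      if 1 - S > 0 then ereal (\<sigma>2 / h i (a i) * \<beta> i / (1 - S)) else PInfty)"

definition lex_less :: "ereal \<times> real \<Rightarrow> ereal \<times> real \<Rightarrow> bool" where
  "lex_less p q = (fst p < fst q \<or> (fst p = fst q \<and> snd p < snd q))"

definition lex_argmin :: "(nat \<Rightarrow> nat \<Rightarrow> real) \<Rightarrow> real \<Rightarrow> (nat \<Rightarrow> real) \<Rightarrow> nat \<Rightarrow> nat
                          \<Rightarrow> (nat \<Rightarrow> nat) \<Rightarrow> nat \<Rightarrow> nat set" where
  "lex_argmin h \<sigma>2 \<beta> M N a i =
     (let f = (\<lambda>j. (cost h \<sigma>2 \<beta> M (a(i := j)) i, load \<beta> M (a(i := j)) j))
      in {j. j < N \<and> (\<forall>k<N. \<not> lex_less (f k) (f j))})"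

text \<open>One step of MAPC*: at time t, mobile (t mod M) (paper: 1 + (t mod M)) updates.\<close>
definition mapc_step :: "(nat \<Rightarrow> nat \<Rightarrow> real) \<Rightarrow> real \<Rightarrow> (nat \<Rightarrow> real) \<Rightarrow> nat \<Rightarrow> nat
                         \<Rightarrow> (nat \<Rightarrow> nat) \<Rightarrow> nat \<Rightarrow> (nat \<Rightarrow> nat) \<Rightarrow> bool" where
  "mapc_step h \<sigma>2 \<beta> M N a t a' =
     (let i = t mod M; A = lex_argmin h \<sigma>2 \<beta> M N a i in
      if a i \<in> A then a' = a else (\<exists>b\<in>A. a' = a(i := b)))"

definition mapc_run :: "(nat \<Rightarrow> nat \<Rightarrow> real) \<Rightarrow> real \<Rightarrow> (nat \<Rightarrow> real) \<Rightarrow> nat \<Rightarrow> nat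
                        \<Rightarrow> (nat \<Rightarrow> nat \<Rightarrow> nat) \<Rightarrow> (nat \<Rightarrow> nat) \<Rightarrow> bool" where
  "mapc_run h \<sigma>2 \<beta> M N x a =
     (x 0 = a \<and> (\<forall>t. mapc_step h \<sigma>2 \<beta> M N (x t) t (x (Suc t))))"

definition steady_state :: "(nat \<Rightarrow> nat \<Rightarrow> real) \<Rightarrow> real \<Rightarrow> (nat \<Rightarrow> real) \<Rightarrow> nat \<Rightarrow> nat
                            \<Rightarrow> (nat \<Rightarrow> nat) \<Rightarrow> bool" where
  "steady_state h \<sigma>2 \<beta> M N a =
     (a \<in> profiles M N \<and> (\<forall>x. mapc_run h \<sigma>2 \<beta> M N x a \<longrightarrow> (\<forall>t. x t = a)))"

definition nash_eq :: "(nat \<Rightarrow> nat \<Rightarrow> real) \<Rightarrow> real \<Rightarrow> (nat \<Rightarrow> real) \<Rightarrow> nat \<Rightarrow> nat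
                       \<Rightarrow> (nat \<Rightarrow> nat) \<Rightarrow> bool" where
  "nash_eq h \<sigma>2 \<beta> M N a =
     (a \<in> profiles M N \<and>
      (\<forall>i<M. \<forall>b<N. cost h \<sigma>2 \<beta> M a i \<le> cost h \<sigma>2 \<beta> M (a(i := b)) i))"

definition pareto_dominated :: "(nat \<Rightarrow> nat \<Rightarrow> real) \<Rightarrow> real \<Rightarrow> (nat \<Rightarrow> real) \<Rightarrow> nat
                                \<Rightarrow> (nat \<Rightarrow> nat) \<Rightarrow> (nat \<Rightarrow> nat) \<Rightarrow> bool" where
  "pareto_dominated h \<sigma>2 \<beta> M a a' =
     ((\<forall>i<M. cost h \<sigma>2 \<beta> M a' i \<le> cost h \<sigma>2 \<beta> M a i) \<and>
      (\<exists>i<M. cost h \<sigma>2 \<beta> M a' i < cost h \<sigma>2 \<beta> M a i))"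

definition pareto_efficient :: "(nat \<Rightarrow> nat \<Rightarrow> real) \<Rightarrow> real \<Rightarrow> (nat \<Rightarrow> real) \<Rightarrow> nat \<Rightarrow> nat
                                \<Rightarrow> (nat \<Rightarrow> nat) \<Rightarrow> bool" where
  "pareto_efficient h \<sigma>2 \<beta> M N a =
     (a \<in> profiles M N \<and> \<not> (\<exists>a'\<in>profiles M N. pareto_dominated h \<sigma>2 \<beta> M a a'))"

end

theory Submission imports Defs "HOL-Library.Product_Lexorder" begin

lemma lex_less_iff: "lex_less p q \<longleftrightarrow> p < q"
  by (cases p; cases q) (auto simp: lex_less_def)

locale symsys =
  fixes h :: "nat \<Rightarrow> nat \<Rightarrow> real" and \<sigma>2 :: real and \<gamma> :: "nat \<Rightarrow> real"
    and M N :: nat and hb :: "nat \<Rightarrow> real" and b :: real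
  assumes M0: "M > 0" and N0: "N > 0"
    and hpos: "\<forall>i<M. \<forall>j<N. h i j > 0"
    and s0: "\<sigma>2 > 0"
    and gpos: "\<forall>i<M. \<gamma> i > 0"
    and feasible: "\<exists>a\<in>profiles M N. \<forall>j<N. load (beta_of \<gamma>) M a j < 1"
    and sym_h: "\<forall>i<M. \<forall>j<N. h i j = hb j"
    and sym_beta: "\<forall>i<M. beta_of \<gamma> i = b"
begin

abbreviation "\<beta> \<equiv> beta_of \<gamma>"
definition cnt :: "(nat \<Rightarrow> nat) \<Rightarrow> nat \<Rightarrow> nat" where
  "cnt a j = card {l. l < M \<and> a l = j}"
definition gr :: "nat \<Rightarrow> nat \<Rightarrow> real" where
  "gr j m = \<sigma>2 / hb j * b / (1 - b * real m)"
definition G :: "nat \<Rightarrow> nat \<Rightarrow> ereal" where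
  "G j m = (if b * real m < 1 then ereal (gr j m) else PInfty)"
abbreviation "C a i \<equiv> cost h \<sigma>2 \<beta> M a i"

lemma b_pos: "0 < b" and b_lt1: "b < 1"
proof -
  have g: "\<gamma> 0 > 0" using gpos M0 by auto
  have e: "b = \<gamma> 0 / (1 + \<gamma> 0)" using sym_beta M0 by (auto simp: beta_of_def)
  show "0 < b" unfolding e using g by simp
  show "b < 1" unfolding e using g by simp
qed

lemma hb_pos: "j < N \<Longrightarrow> hb j > 0"
  using hpos sym_h M0 by force

lemma load_eq: "load \<beta> M a j = b * real (cnt a j)"
proof -
  have "load \<beta> M a j = (\<Sum>l\<in>{l. l < M \<and> a l = j}. b)"
    unfolding load_def by (rule sum.cong) (auto simp: sym_beta)
  thus ?thesis by (simp add: cnt_def)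
qed

lemma cost_eq: "i < M \<Longrightarrow> a i < N \<Longrightarrow> C a i = G (a i) (cnt a (a i))"
  unfolding cost_def Let_def load_eq G_def gr_def using sym_h sym_beta by auto

lemma cnt_upd_same: "i < M \<Longrightarrow> cnt (a(i := k)) k = (if a i = k then cnt a k else Suc (cnt a k))"
proof -
  assume i: "i < M"
  show ?thesis
  proof (cases "a i = k")
    case True
    hence "a(i:=k) = a" by auto
    thus ?thesis using True by simp
  next
    case False
    have "{l. l < M \<and> (a(i := k)) l = k} = insert i {l. l < M \<and> a l = k}"
      using i False by auto
    moreover have "i \<notin> {l. l < M \<and> a l = k}" using False by auto
    ultimately show ?thesis using False by (simp add: cnt_def)
  qed
qed

lemma argmin_nonempty: "lex_argmin h \<sigma>2 \<beta> M N a i \<noteq> {}"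
proof -
  define f where "f = (\<lambda>j. (cost h \<sigma>2 \<beta> M (a(i := j)) i, load \<beta> M (a(i := j)) j))"
  have fin: "finite (f ` {..<N})" "f ` {..<N} \<noteq> {}" using N0 by auto
  obtain k where k: "k < N" "f k = Min (f ` {..<N})"
    using Min_in[OF fin] by auto
  have "\<forall>k'<N. \<not> lex_less (f k') (f k)"
    using k fin by (auto simp: lex_less_iff not_less)
  thus ?thesis using k unfolding lex_argmin_def Let_def f_def by auto
qed


abbreviation "AM a i \<equiv> lex_argmin h \<sigma>2 \<beta> M N a i"

lemma step_ex: "\<exists>a'. mapc_step h \<sigma>2 \<beta> M N a t a'"
proof (cases "a (t mod M) \<in> AM a (t mod M)")
  case True thus ?thesis by (auto simp: mapc_step_def Let_def)
next
  case False
  obtain c where "c \<in> AM a (t mod M)" using argmin_nonempty by blast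
  thus ?thesis using False unfolding mapc_step_def Let_def by auto
qed

lemma steady_iff: "steady_state h \<sigma>2 \<beta> M N a \<longleftrightarrow>
   a \<in> profiles M N \<and> (\<forall>i<M. a i \<in> AM a i)"
proof
  assume st: "steady_state h \<sigma>2 \<beta> M N a"
  show "a \<in> profiles M N \<and> (\<forall>i<M. a i \<in> AM a i)"
  proof (intro conjI allI impI)
    show "a \<in> profiles M N" using st by (simp add: steady_state_def)
    fix i assume i: "i < M"
    show "a i \<in> AM a i"
    proof (rule ccontr)
      assume nin: "a i \<notin> AM a i"
      define x where "x = rec_nat a (\<lambda>t y. SOME a'. mapc_step h \<sigma>2 \<beta> M N y t a')"
      have x0: "x 0 = a" by (simp add: x_def)
      have xs: "mapc_step h \<sigma>2 \<beta> M N (x t) t (x (Suc t))" for t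
        unfolding x_def by (simp, rule someI_ex[OF step_ex])
      have "mapc_run h \<sigma>2 \<beta> M N x a" using x0 xs by (simp add: mapc_run_def)
      hence all: "\<forall>t. x t = a" using st by (simp add: steady_state_def)
      have "mapc_step h \<sigma>2 \<beta> M N a i a" using xs[of i] all by simp
      thus False using nin i by (auto simp: mapc_step_def Let_def) (metis fun_upd_same)
    qed
  qed
next
  assume H: "a \<in> profiles M N \<and> (\<forall>i<M. a i \<in> AM a i)"
  show "steady_state h \<sigma>2 \<beta> M N a"
    unfolding steady_state_def
  proof (intro conjI allI impI)
    show "a \<in> profiles M N" using H by simp
    fix x t assume r: "mapc_run h \<sigma>2 \<beta> M N x a"
    show "x t = a"
    proof (induction t)
      case 0 thus ?case using r by (simp add: mapc_run_def)
    next
      case (Suc t)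
      have "mapc_step h \<sigma>2 \<beta> M N (x t) t (x (Suc t))" using r by (simp add: mapc_run_def)
      moreover have "t mod M < M" using M0 by simp
      ultimately show ?case using Suc H by (auto simp: mapc_step_def Let_def)
    qed
  qed
qed


lemma cnt_sum: "cnt a j = (\<Sum>l<M. if a l = j then 1 else 0)"
proof -
  have "{l. l < M \<and> a l = j} = {l\<in>{..<M}. a l = j}" by auto
  hence "cnt a j = card {l\<in>{..<M}. a l = j}" by (simp add: cnt_def)
  also have "\<dots> = (\<Sum>l<M. if a l = j then 1 else 0)"
    unfolding card_eq_sum by (rule sum.inter_filter) simp
  finally show ?thesis .
qed

lemma sum_cnt: "a \<in> profiles M N \<Longrightarrow> (\<Sum>j<N. cnt a j) = M"
proof -
  assume a: "a \<in> profiles M N"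
  have "(\<Sum>j<N. cnt a j) = (\<Sum>j<N. \<Sum>l<M. if a l = j then 1 else 0)" by (simp add: cnt_sum)
  also have "\<dots> = (\<Sum>l<M. \<Sum>j<N. if a l = j then 1 else 0)" by (rule sum.swap)
  also have "\<dots> = (\<Sum>l<M. (1::nat))"
  proof (rule sum.cong)
    fix l assume "l \<in> {..<M}"
    hence "a l < N" using a by (auto simp: profiles_def)
    thus "(\<Sum>j<N. if a l = j then 1 else 0) = (1::nat)" by (simp add: sum.delta)
  qed simp
  finally show ?thesis by simp
qed

lemma f_eq: "i < M \<Longrightarrow> k < N \<Longrightarrow>
  (cost h \<sigma>2 \<beta> M (a(i:=k)) i, load \<beta> M (a(i:=k)) k)
   = (G k (if a i = k then cnt a k else Suc (cnt a k)), b * real (if a i = k then cnt a k else Suc (cnt a k)))"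
  using cost_eq[of i "a(i:=k)"] load_eq[of "a(i:=k)" k] cnt_upd_same[of i a k] by simp

lemma G_inf: "G j m = PInfty \<longleftrightarrow> \<not> b * real m < 1"
  by (simp add: G_def)

lemma ne_fin: assumes ne: "nash_eq h \<sigma>2 \<beta> M N a" and i: "i < M"
  shows "b * real (cnt a (a i)) < 1"
proof (rule ccontr)
  assume c: "\<not> b * real (cnt a (a i)) < 1"
  have a: "a \<in> profiles M N" using ne by (simp add: nash_eq_def)
  have ai: "a i < N" using a i by (simp add: profiles_def)
  have Ci: "C a i = PInfty" using cost_eq[of i a, OF i ai] c by (simp add: G_def)
  have kinf: "\<not> b * real (Suc (cnt a k)) < 1" if k: "k < N" "k \<noteq> a i" for k
  proof -
    have "C a i \<le> C (a(i:=k)) i" using ne i k by (simp add: nash_eq_def)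
    moreover have "C (a(i:=k)) i = G k (Suc (cnt a k))" using f_eq[OF i k(1), of a] k by simp
    ultimately have "G k (Suc (cnt a k)) = PInfty" using Ci by simp
    thus ?thesis by (metis G_inf)
  qed
  obtain a0 where a0: "a0 \<in> profiles M N" "\<forall>j<N. load \<beta> M a0 j < 1" using feasible by blast
  have a0': "b * real (cnt a0 k) < 1" if "k < N" for k using a0(2) that by (simp add: load_eq)
  have le: "cnt a0 k \<le> cnt a k" if k: "k < N" for k
  proof (cases "k = a i")
    case True
    have "b * real (cnt a0 k) < b * real (cnt a k)" using a0'[OF k] c True by simp
    hence "real (cnt a0 k) < real (cnt a k)" using b_pos by (simp only: mult_less_cancel_left_pos)
    thus ?thesis by simp
  next
    case False
    have "b * real (cnt a0 k) < b * real (Suc (cnt a k))" using a0'[OF k] kinf[OF k False] by linarith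
    hence "real (cnt a0 k) < real (Suc (cnt a k))" using b_pos by (simp only: mult_less_cancel_left_pos)
    hence "cnt a0 k < Suc (cnt a k)" by (simp only: of_nat_less_iff)
    thus ?thesis by simp
  qed
  have lt: "cnt a0 (a i) < cnt a (a i)"
  proof -
    have "b * real (cnt a0 (a i)) < b * real (cnt a (a i))" using a0'[OF ai] c by linarith
    hence "real (cnt a0 (a i)) < real (cnt a (a i))" using b_pos by (simp only: mult_less_cancel_left_pos)
    thus ?thesis by simp
  qed
  have "(\<Sum>j\<in>{..<N}. cnt a0 j) < (\<Sum>j\<in>{..<N}. cnt a j)"
    by (rule sum_strict_mono_ex1) (use le lt ai in auto)
  thus False using sum_cnt[OF a] sum_cnt[OF a0(1)] by simp
qed


lemma A_pos: "j < N \<Longrightarrow> \<sigma>2 / hb j * b > 0"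
  using hb_pos s0 b_pos by simp

lemma gr_pos: "j < N \<Longrightarrow> b * real x < 1 \<Longrightarrow> gr j x > 0"
  unfolding gr_def by (rule divide_pos_pos) (use A_pos in auto)

lemma gr_strict: assumes "j < N" "b * real y < 1" "x < y" shows "gr j x < gr j y"
proof -
  have A: "\<sigma>2 / hb j * b > 0" using A_pos assms(1) .
  have "b * real x < b * real y" using assms(3) b_pos by simp
  hence p: "0 < 1 - b * real y" and lt: "1 - b * real y < 1 - b * real x" using assms(2) by linarith+
  have "\<sigma>2 / hb j * b / (1 - b * real x) < \<sigma>2 / hb j * b / (1 - b * real y)"
    by (rule divide_strict_left_mono[OF lt A]) (use p lt in simp)
  thus ?thesis unfolding gr_def .
qed

lemma gr_mono: "j < N \<Longrightarrow> b * real y < 1 \<Longrightarrow> x \<le> y \<Longrightarrow> gr j x \<le> gr j y"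
  using gr_strict[of j y x] by (cases "x = y") auto

lemma G_fin: "b * real m < 1 \<Longrightarrow> G j m = ereal (gr j m)"
  by (simp add: G_def)

lemma bmono: "b * real y < 1 \<Longrightarrow> x \<le> y \<Longrightarrow> b * real x < 1"
proof -
  assume "b * real y < 1" "x \<le> y"
  moreover have "b * real x \<le> b * real y" using \<open>x \<le> y\<close> b_pos by simp
  ultimately show ?thesis by linarith
qed

lemma steady_cond:
  assumes i: "i < M" and a: "a \<in> profiles M N" and st: "a i \<in> AM a i" and k: "k < N" "k \<noteq> a i"
  shows "G (a i) (cnt a (a i)) \<le> G k (Suc (cnt a k)) \<and>
    (G (a i) (cnt a (a i)) = G k (Suc (cnt a k)) \<longrightarrow> cnt a (a i) \<le> Suc (cnt a k))"
proof -
  have ai: "a i < N" using a i by (simp add: profiles_def)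
  have "\<not> lex_less (cost h \<sigma>2 \<beta> M (a(i:=k)) i, load \<beta> M (a(i:=k)) k)
     (cost h \<sigma>2 \<beta> M (a(i:=a i)) i, load \<beta> M (a(i:=a i)) (a i))"
    using st k ai unfolding lex_argmin_def Let_def by blast
  hence "\<not> lex_less (G k (Suc (cnt a k)), b * real (Suc (cnt a k))) (G (a i) (cnt a (a i)), b * real (cnt a (a i)))"
    using f_eq[OF i k(1), of a] f_eq[OF i ai, of a] k(2) by simp
  hence "\<not> (G k (Suc (cnt a k)) < G (a i) (cnt a (a i)))"
    "G k (Suc (cnt a k)) = G (a i) (cnt a (a i)) \<Longrightarrow> \<not> b * real (Suc (cnt a k)) < b * real (cnt a (a i))"
    unfolding lex_less_def by auto
  moreover have "\<not> b * real (Suc (cnt a k)) < b * real (cnt a (a i)) \<Longrightarrow> cnt a (a i) \<le> Suc (cnt a k)"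
    using b_pos by (simp add: not_less)
  ultimately show ?thesis by (auto simp: not_less)
qed

lemma steady_ne: "steady_state h \<sigma>2 \<beta> M N a \<Longrightarrow> nash_eq h \<sigma>2 \<beta> M N a"
proof -
  assume "steady_state h \<sigma>2 \<beta> M N a"
  hence a: "a \<in> profiles M N" and st: "\<forall>i<M. a i \<in> AM a i" by (auto simp: steady_iff)
  have "C a i \<le> C (a(i := k)) i" if i: "i < M" and k: "k < N" for i k
  proof -
    have "\<not> lex_less (cost h \<sigma>2 \<beta> M (a(i:=k)) i, load \<beta> M (a(i:=k)) k)
       (cost h \<sigma>2 \<beta> M (a(i:=a i)) i, load \<beta> M (a(i:=a i)) (a i))"
      using st i k unfolding lex_argmin_def Let_def by blast
    thus ?thesis unfolding lex_less_def by (auto simp: not_less)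
  qed
  thus ?thesis using a by (simp add: nash_eq_def)
qed

lemma fiber_sum: assumes a: "a \<in> profiles M N"
  shows "(\<Sum>l<M. F (a l)) = (\<Sum>j<N. of_nat (cnt a j) * (F j :: 'c::comm_semiring_1))"
proof -
  have "(\<Sum>l<M. F (a l)) = (\<Sum>l<M. \<Sum>j<N. if a l = j then F j else 0)"
  proof (rule sum.cong)
    fix l assume "l \<in> {..<M}"
    hence "a l < N" using a by (auto simp: profiles_def)
    thus "F (a l) = (\<Sum>j<N. if a l = j then F j else 0)" by (simp add: sum.delta)
  qed simp
  also have "\<dots> = (\<Sum>j<N. \<Sum>l<M. if a l = j then F j else 0)" by (rule sum.swap)
  also have "\<dots> = (\<Sum>j<N. of_nat (cnt a j) * F j)"
  proof (rule sum.cong)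
    fix j
    have "(\<Sum>l<M. if a l = j then F j else 0) = (\<Sum>l<M. of_nat (if a l = j then 1 else 0) * F j)"
      by (rule sum.cong) auto
    also have "\<dots> = of_nat (cnt a j) * F j" by (simp add: cnt_sum sum_distrib_right)
    finally show "(\<Sum>l<M. if a l = j then F j else 0) = of_nat (cnt a j) * F j" .
  qed simp
  finally show ?thesis .
qed

lemma fiber_card: assumes a: "a \<in> profiles M N"
  shows "card {l. l < M \<and> Pr (a l)} = (\<Sum>j<N. if Pr j then cnt a j else 0)"
proof -
  have "{l. l < M \<and> Pr (a l)} = {l\<in>{..<M}. Pr (a l)}" by auto
  hence "card {l. l < M \<and> Pr (a l)} = card {l\<in>{..<M}. Pr (a l)}" by simp
  also have "\<dots> = (\<Sum>l<M. (if Pr (a l) then 1 else 0::nat))"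
    unfolding card_eq_sum by (rule sum.inter_filter) simp
  also have "\<dots> = (\<Sum>j<N. cnt a j * (if Pr j then 1 else 0))"
    using fiber_sum[OF a, of "\<lambda>j. if Pr j then 1 else (0::nat)"] by simp
  finally show ?thesis by (simp add: if_distrib cong: if_cong)
qed

end
context symsys begin

lemma cross_real:
  fixes Aj Ak u v c :: real
  assumes "Aj > 0" "0 < v" "v \<le> u" "0 < c" "Ak / u = Aj / v"
  shows "Aj / (v + c) \<le> Ak / (u + c)"
proof -
  have u: "u > 0" using assms by linarith
  have Ak: "Ak = Aj * u / v" using assms(5) u assms(2) by (simp add: field_simps)
  have "Aj * (u + c) * v \<le> Aj * u * (v + c)"
  proof -
    have "Aj * c * v \<le> Aj * c * u" using assms by (intro mult_left_mono) auto
    thus ?thesis by (simp add: algebra_simps)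
  qed
  hence "Aj * (v * (u + c)) \<le> Aj * u * (v + c)" by (simp add: algebra_simps)
  hence "Aj \<le> Aj * u * (v + c) / (v * (u + c))" using u assms(2,4) by (simp add: pos_le_divide_eq)
  also have "\<dots> = (Aj * u / v) / (u + c) * (v + c)" using u assms(2,4) by (simp add: field_simps)
  finally have "Aj / (v + c) \<le> (Aj * u / v) / (u + c)"
    using assms(2,4) by (simp add: pos_divide_le_eq)
  thus ?thesis using Ak by simp
qed

lemma gr_cross:
  assumes j: "j < N" and k: "k < N" and xy: "x \<le> y" and by1: "b * real (Suc y) < 1"
    and eq: "gr k (Suc x) = gr j (Suc y)"
  shows "gr j y \<le> gr k x"
proof -
  have e1: "(1 - b * real (Suc y)) + b = 1 - b * real y" and e2: "(1 - b * real (Suc x)) + b = 1 - b * real x"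
    by (simp_all add: algebra_simps)
  have "\<sigma>2 / hb j * b / ((1 - b * real (Suc y)) + b) \<le> \<sigma>2 / hb k * b / ((1 - b * real (Suc x)) + b)"
  proof (rule cross_real)
    show "\<sigma>2 / hb j * b > 0" using A_pos j .
    show "0 < 1 - b * real (Suc y)" using by1 by simp
    show "1 - b * real (Suc y) \<le> 1 - b * real (Suc x)" using xy b_pos by simp
    show "0 < b" using b_pos .
    show "\<sigma>2 / hb k * b / (1 - b * real (Suc x)) = \<sigma>2 / hb j * b / (1 - b * real (Suc y))"
      using eq unfolding gr_def .
  qed
  from this[unfolded e1 e2] show ?thesis unfolding gr_def .
qed


lemma improve:
  assumes a: "a \<in> profiles M N" and j: "j < N" and k: "k < N" and jk: "j \<noteq> k"
    and lt: "Suc (cnt a k) < cnt a j" and bj: "b * real (cnt a j) < 1"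
    and eq: "gr k (Suc (cnt a k)) = gr j (cnt a j)"
  shows "\<exists>a'\<in>profiles M N. pareto_dominated h \<sigma>2 \<beta> M a a'"
proof -
  define R where "R = {l. l < M \<and> a l = j}"
  define Rk where "Rk = {l. l < M \<and> a l = k}"
  have finR: "finite R" "finite Rk" by (auto simp: R_def Rk_def)
  have cR: "card R = cnt a j" "card Rk = cnt a k" by (simp_all add: R_def Rk_def cnt_def)
  obtain S where S: "S \<subseteq> R" "card S = Suc (cnt a k)" "finite S"
    using obtain_subset_with_card_n[of "Suc (cnt a k)" R] lt cR by auto
  define a' where "a' = (\<lambda>l. if l < M \<and> a l = k then j else if l \<in> S then k else a l)"
  have SR: "\<And>l. l \<in> S \<Longrightarrow> l < M \<and> a l = j" using S(1) by (auto simp: R_def)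
  have a': "a' \<in> profiles M N"
    using a j k SR unfolding profiles_def a'_def by (auto, force)
  obtain y where y: "cnt a j = Suc y" using lt by (cases "cnt a j") auto
  have ky: "cnt a k \<le> y" using lt y by simp
  have ck: "cnt a' k = Suc (cnt a k)"
  proof -
    have "{l. l < M \<and> a' l = k} = S" using SR jk by (auto simp: a'_def)
    thus ?thesis using S by (simp add: cnt_def)
  qed
  have cj: "cnt a' j = y"
  proof -
    have "{l. l < M \<and> a' l = j} = Rk \<union> (R - S)" using SR jk by (auto simp: a'_def R_def Rk_def)
    moreover have "Rk \<inter> (R - S) = {}" using jk by (auto simp: R_def Rk_def)
    ultimately have "cnt a' j = card Rk + card (R - S)" using finR by (simp add: cnt_def card_Un_disjoint)
    also have "card (R - S) = card R - card S" using S finR by (simp add: card_Diff_subset)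
    finally show ?thesis using cR S y ky by simp
  qed
  have cm: "cnt a' m = cnt a m" if "m \<noteq> j" "m \<noteq> k" for m
  proof -
    have "{l. l < M \<and> a' l = m} = {l. l < M \<and> a l = m}" using SR that by (auto simp: a'_def)
    thus ?thesis by (simp add: cnt_def)
  qed
  have by1: "b * real (Suc (cnt a k)) < 1" using bmono[OF bj, of "Suc (cnt a k)"] lt by linarith
  have byy: "b * real y < 1" using bmono[OF bj, of y] y by linarith
  have yj: "gr j y < gr j (cnt a j)" using gr_strict[OF j bj] y by simp
  have cross: "gr j y \<le> gr k (cnt a k)"
    using gr_cross[OF j k ky] bj eq y by simp
  have le: "C a' l \<le> C a l" if l: "l < M" for l
  proof -
    have al: "a l < N" "a' l < N" using a a' l by (auto simp: profiles_def)
    have "G (a' l) (cnt a' (a' l)) \<le> G (a l) (cnt a (a l))"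
    proof (cases "a l = k")
      case True
      hence "a' l = j" using l by (simp add: a'_def)
      thus ?thesis using True cj cross byy bmono[OF by1, of "cnt a k"] by (simp add: G_fin)
    next
      case False
      show ?thesis
      proof (cases "l \<in> S")
        case True
        hence "a' l = k" "a l = j" using False SR by (auto simp: a'_def)
        thus ?thesis using ck by1 bj eq by (simp add: G_fin)
      next
        case nS: False
        hence a'l: "a' l = a l" using False by (simp add: a'_def)
        show ?thesis
        proof (cases "a l = j")
          case True
          thus ?thesis using a'l cj byy bj yj by (simp add: G_fin)
        next
          case False
          thus ?thesis using a'l cm \<open>a l \<noteq> k\<close> by simp
        qed
      qed
    qed
    thus ?thesis using cost_eq[of l a', OF l al(2)] cost_eq[of l a, OF l al(1)] by simp
  qed
  have "\<not> R \<subseteq> S"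
  proof
    assume "R \<subseteq> S"
    hence "card R \<le> card S" using S(3) card_mono by blast
    thus False using S lt cR by simp
  qed
  then obtain l0 where l0: "l0 \<in> R" "l0 \<notin> S" by blast
  have l0': "l0 < M" "a l0 = j" using l0 by (auto simp: R_def)
  have a'l0: "a' l0 = j" using l0' l0(2) jk by (simp add: a'_def)
  have "C a' l0 = G j y" using cost_eq[of l0 a', OF l0'(1)] a'l0 cj j by simp
  also have "\<dots> = ereal (gr j y)" using byy by (rule G_fin)
  also have "\<dots> < ereal (gr j (cnt a j))" using yj by simp
  also have "\<dots> = C a l0" using cost_eq[of l0 a, OF l0'(1)] l0' j bj by (simp add: G_fin)
  finally have "C a' l0 < C a l0" .
  hence "pareto_dominated h \<sigma>2 \<beta> M a a'" using le l0' unfolding pareto_dominated_def by blast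
  thus ?thesis using a' by blast
qed


lemma ne_pe_steady:
  assumes ne: "nash_eq h \<sigma>2 \<beta> M N a" and pe: "pareto_efficient h \<sigma>2 \<beta> M N a"
  shows "steady_state h \<sigma>2 \<beta> M N a"
proof -
  have a: "a \<in> profiles M N" using ne by (simp add: nash_eq_def)
  have "a i \<in> AM a i" if i: "i < M" for i
  proof -
    have ai: "a i < N" using a i by (simp add: profiles_def)
    have "\<not> lex_less (cost h \<sigma>2 \<beta> M (a(i:=k)) i, load \<beta> M (a(i:=k)) k)
       (cost h \<sigma>2 \<beta> M (a(i:=a i)) i, load \<beta> M (a(i:=a i)) (a i))" if k: "k < N" for k
    proof
      assume L: "lex_less (cost h \<sigma>2 \<beta> M (a(i:=k)) i, load \<beta> M (a(i:=k)) k)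
       (cost h \<sigma>2 \<beta> M (a(i:=a i)) i, load \<beta> M (a(i:=a i)) (a i))"
      have kn: "k \<noteq> a i" using L by (auto simp: lex_less_def)
      have L2: "lex_less (G k (Suc (cnt a k)), b * real (Suc (cnt a k))) (G (a i) (cnt a (a i)), b * real (cnt a (a i)))"
        using L f_eq[OF i k, of a] f_eq[OF i ai, of a] kn by simp
      have "C a i \<le> C (a(i:=k)) i" using ne i k by (simp add: nash_eq_def)
      hence "G (a i) (cnt a (a i)) \<le> G k (Suc (cnt a k))"
        using f_eq[OF i k, of a] kn cost_eq[of i a, OF i ai] by simp
      with L2 have Geq: "G k (Suc (cnt a k)) = G (a i) (cnt a (a i))"
        and blt: "b * real (Suc (cnt a k)) < b * real (cnt a (a i))" unfolding lex_less_def by auto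
      have lt: "Suc (cnt a k) < cnt a (a i)" using blt b_pos by simp
      have bj: "b * real (cnt a (a i)) < 1" using ne_fin[OF ne i] .
      have bk: "b * real (Suc (cnt a k)) < 1" using blt bj by linarith
      have "gr k (Suc (cnt a k)) = gr (a i) (cnt a (a i))" using Geq bj bk by (simp add: G_fin)
      then obtain a' where "a' \<in> profiles M N" "pareto_dominated h \<sigma>2 \<beta> M a a'"
        using improve[OF a ai k kn[symmetric] lt bj] by blast
      thus False using pe by (auto simp: pareto_efficient_def)
    qed
    thus ?thesis using ai unfolding lex_argmin_def Let_def by blast
  qed
  thus ?thesis using a by (simp add: steady_iff)
qed

end
context symsys begin

lemma resident: "0 < cnt a j \<Longrightarrow> \<exists>l<M. a l = j"
  unfolding cnt_def by (metis (mono_tags, lifting) card_gt_0_iff empty_Collect_eq)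

lemma gr_prev: assumes j: "j < N" and bp: "b * real (Suc p) < 1" and V: "gr j (Suc p) = V"
  shows "gr j p = V * (1 - b * real (Suc p)) / (1 - b * real p)"
proof -
  have pos: "1 - b * real (Suc p) > 0" using bp by simp
  have "\<sigma>2 / hb j * b = gr j (Suc p) * (1 - b * real (Suc p))" unfolding gr_def using pos by simp
  hence "\<sigma>2 / hb j * b = V * (1 - b * real (Suc p))" using V by simp
  thus ?thesis unfolding gr_def by simp
qed


lemma steady_pe:
  assumes st0: "steady_state h \<sigma>2 \<beta> M N a"
  shows "pareto_efficient h \<sigma>2 \<beta> M N a"
proof -
  have a: "a \<in> profiles M N" and st: "\<forall>i<M. a i \<in> AM a i" using st0 by (auto simp: steady_iff)
  have ne: "nash_eq h \<sigma>2 \<beta> M N a" using steady_ne[OF st0] .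
  have aN: "\<And>l. l < M \<Longrightarrow> a l < N" using a by (simp add: profiles_def)
  have fa: "\<And>l. l < M \<Longrightarrow> b * real (cnt a (a l)) < 1" using ne_fin[OF ne] .
  define rc where "rc l = gr (a l) (cnt a (a l))" for l
  have Crc: "\<And>l. l < M \<Longrightarrow> C a l = ereal (rc l)"
    using cost_eq aN fa by (simp add: rc_def G_fin)
  show ?thesis unfolding pareto_efficient_def
  proof (intro conjI a notI)
    assume "\<exists>a'\<in>profiles M N. pareto_dominated h \<sigma>2 \<beta> M a a'"
    then obtain a' where a': "a' \<in> profiles M N" and dom: "pareto_dominated h \<sigma>2 \<beta> M a a'" by blast
    have a'N: "\<And>l. l < M \<Longrightarrow> a' l < N" using a' by (simp add: profiles_def)
    have le: "\<And>l. l < M \<Longrightarrow> C a' l \<le> C a l" using dom by (simp add: pareto_dominated_def)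
    obtain l0 where l0: "l0 < M" "C a' l0 < C a l0" using dom by (auto simp: pareto_dominated_def)
    have fa': "b * real (cnt a' (a' l)) < 1" if l: "l < M" for l
    proof (rule ccontr)
      assume "\<not> b * real (cnt a' (a' l)) < 1"
      hence "C a' l = PInfty" using cost_eq[of l a', OF l a'N[OF l]] by (simp add: G_def)
      thus False using le[OF l] Crc[OF l] by simp
    qed
    define rc' where "rc' l = gr (a' l) (cnt a' (a' l))" for l
    have Crc': "\<And>l. l < M \<Longrightarrow> C a' l = ereal (rc' l)"
      using cost_eq a'N fa' by (simp add: rc'_def G_fin)
    have rle: "\<And>l. l < M \<Longrightarrow> rc' l \<le> rc l" using le Crc Crc' by fastforce
    have rlt: "rc' l0 < rc l0" using l0 Crc Crc' by fastforce
    define V where "V = Max (rc ` {..<M})"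
    have finM: "finite (rc ` {..<M})" "rc ` {..<M} \<noteq> {}" using M0 by auto
    have rV: "\<And>l. l < M \<Longrightarrow> rc l \<le> V" unfolding V_def using finM by auto
    obtain ls where ls: "ls < M" "rc ls = V" using Max_in[OF finM] unfolding V_def by auto
    have occ: "b * real (cnt a j) < 1 \<and> gr j (cnt a j) \<le> V" if nj: "0 < cnt a j" for j
    proof -
      obtain l where "l < M" "a l = j" using resident[OF nj] by blast
      thus ?thesis using fa rV by (auto simp: rc_def)
    qed
    have Wk: "ereal V \<le> G k (Suc (cnt a k))" if k: "k < N" for k
    proof (cases "k = a ls")
      case True
      show ?thesis
      proof (cases "b * real (Suc (cnt a k)) < 1")
        case True
        hence "gr k (cnt a k) \<le> gr k (Suc (cnt a k))" using gr_mono[OF k] by simp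
        thus ?thesis using True \<open>k = a ls\<close> ls by (simp add: G_fin rc_def)
      qed (simp add: G_def)
    next
      case False
      have "G (a ls) (cnt a (a ls)) \<le> G k (Suc (cnt a k))"
        using steady_cond[OF ls(1) a _ k False] st ls(1) by blast
      thus ?thesis using cost_eq[of ls a, OF ls(1) aN[OF ls(1)]] Crc[OF ls(1)] ls by simp
    qed
    define JV where "JV = {j. j < N \<and> 0 < cnt a j \<and> gr j (cnt a j) = V}"
    have "0 < cnt a (a ls)" unfolding cnt_def using ls(1) by (subst card_gt_0_iff) auto
    hence JVls: "a ls \<in> JV" using ls aN[OF ls(1)] unfolding JV_def rc_def by auto
    have finJV: "finite (cnt a ` JV)" "cnt a ` JV \<noteq> {}" using JVls by (auto simp: JV_def)
    define m where "m = Max (cnt a ` JV)"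
    have mge: "\<And>i. i \<in> JV \<Longrightarrow> cnt a i \<le> m" unfolding m_def using finJV by auto
    obtain im where im: "im \<in> JV" "cnt a im = m" using Max_in[OF finJV] unfolding m_def by auto
    have m0: "m > 0" using im by (simp add: JV_def)
    then obtain p where p: "m = Suc p" by (cases m) auto
    have F1: "cnt a' k = Suc (cnt a k) \<and> gr k (Suc (cnt a k)) = V \<and> k \<notin> JV \<and> m \<le> Suc (cnt a k)
              \<and> b * real (Suc (cnt a k)) < 1"
      if k: "k < N" and gain: "cnt a k < cnt a' k" for k
    proof -
      obtain l where l: "l < M" "a' l = k" using resident[of a' k] gain by auto
      have bk': "b * real (cnt a' k) < 1" using fa'[OF l(1)] l by simp
      have bk: "b * real (Suc (cnt a k)) < 1" using bmono[OF bk', of "Suc (cnt a k)"] gain by simp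
      have g1: "gr k (cnt a' k) \<le> V" using rle[OF l(1)] rV[OF l(1)] l by (simp add: rc'_def)
      have g2: "V \<le> gr k (Suc (cnt a k))" using Wk[OF k] bk by (simp add: G_fin)
      have g3: "gr k (Suc (cnt a k)) \<le> gr k (cnt a' k)" using gr_mono[OF k bk'] gain by simp
      have eqV: "gr k (Suc (cnt a k)) = V" using g1 g2 g3 by linarith
      have n'eq: "cnt a' k = Suc (cnt a k)"
      proof (rule ccontr)
        assume "cnt a' k \<noteq> Suc (cnt a k)"
        hence "Suc (cnt a k) < cnt a' k" using gain by simp
        hence "gr k (Suc (cnt a k)) < gr k (cnt a' k)" using gr_strict[OF k bk'] by simp
        thus False using g1 g2 by linarith
      qed
      have kJV: "k \<notin> JV"
      proof
        assume "k \<in> JV"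
        hence "gr k (cnt a k) = V" by (simp add: JV_def)
        moreover have "gr k (cnt a k) < gr k (Suc (cnt a k))" using gr_strict[OF k bk] by simp
        ultimately show False using eqV by simp
      qed
      have "cnt a im \<le> Suc (cnt a k)"
      proof -
        have imN: "im < N" "0 < cnt a im" "gr im (cnt a im) = V" using im by (auto simp: JV_def)
        obtain l' where l': "l' < M" "a l' = im" using resident[OF imN(2)] by blast
        have ik: "k \<noteq> a l'" using kJV im l' by auto
        note sc = steady_cond[OF l'(1) a _ k ik]
        have "G (a l') (cnt a (a l')) = ereal V" using l' imN fa[OF l'(1)] by (simp add: G_fin)
        moreover have "G k (Suc (cnt a k)) = ereal V" using bk eqV by (simp add: G_fin)
        ultimately show ?thesis using sc st l' by auto
      qed
      thus ?thesis using n'eq eqV kJV im bk by simp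
    qed
    define Lj where "Lj j = (if gr j (cnt a' j) < V then cnt a' j else 0)" for j
    define Pj where "Pj j = (if gr j (cnt a j) < V then cnt a j else 0)" for j
    have cardLP: "(\<Sum>j<N. Pj j) \<le> (\<Sum>j<N. Lj j)"
    proof -
      have "{l. l < M \<and> gr (a l) (cnt a (a l)) < V} \<subseteq> {l. l < M \<and> gr (a' l) (cnt a' (a' l)) < V}"
        using rle by (force simp: rc_def rc'_def)
      hence "card {l. l < M \<and> gr (a l) (cnt a (a l)) < V} \<le> card {l. l < M \<and> gr (a' l) (cnt a' (a' l)) < V}"
        by (rule card_mono[rotated]) simp
      thus ?thesis
        using fiber_card[OF a, of "\<lambda>j. gr j (cnt a j) < V"] fiber_card[OF a', of "\<lambda>j. gr j (cnt a' j) < V"]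
        by (simp add: Lj_def Pj_def)
    qed
    define d where "d j = int (cnt a' j) - int (cnt a j)" for j
    define slack where "slack j = (1 - int m) * d j - (int (Lj j) - int (Pj j))" for j
    define W where "W = V * (1 - b * real (Suc p)) / (1 - b * real p)"
    define \<delta> where "\<delta> = real (Suc p) * V - real p * W"
    define ident where "ident j \<longleftrightarrow> real (cnt a' j) * gr j (cnt a' j) - real (cnt a j) * gr j (cnt a j)
        = \<delta> * (real (cnt a' j) - real (cnt a j))" for j
    have PnJV: "Pj j = cnt a j" if j: "j < N" and nJV: "j \<notin> JV" for j
    proof (cases "cnt a j = 0")
      case False
      hence "gr j (cnt a j) \<le> V" "gr j (cnt a j) \<noteq> V" using occ nJV j by (auto simp: JV_def)
      thus ?thesis by (simp add: Pj_def)
    qed (simp add: Pj_def)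
    have PJV: "Pj j = 0" if "j \<in> JV" for j using that by (simp add: Pj_def JV_def)
    have identeq: "ident j" if "cnt a' j = cnt a j" for j using that by (simp add: ident_def)
    have perj: "0 \<le> slack j \<and> (slack j = 0 \<longrightarrow> ident j)" if j: "j < N" for j
    proof (cases "cnt a j < cnt a' j")
      case True
      note F = F1[OF j True]
      have L: "Lj j = 0" using F by (simp add: Lj_def)
      have P: "Pj j = cnt a j" using PnJV j F by simp
      have sl: "slack j = 1 - int m + int (cnt a j)" using F L P by (simp add: slack_def d_def)
      have "0 \<le> slack j" using sl F by simp
      moreover have "ident j" if "slack j = 0"
      proof -
        have np: "cnt a j = p" using sl that p by simp
        have gp: "gr j p = W" using gr_prev[OF j, of p V] F np by (simp add: W_def)
        show ?thesis using F np gp by (simp add: ident_def \<delta>_def)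
      qed
      ultimately show ?thesis by blast
    next
      case False
      hence le': "cnt a' j \<le> cnt a j" by simp
      show ?thesis
      proof (cases "j \<in> JV")
        case True
        have JVj: "0 < cnt a j" "gr j (cnt a j) = V" using True by (auto simp: JV_def)
        have bj: "b * real (cnt a j) < 1" using occ JVj by blast
        have P: "Pj j = 0" using PJV True .
        show ?thesis
        proof (cases "cnt a' j = cnt a j")
          case True
          thus ?thesis using P JVj by (simp add: slack_def d_def Lj_def identeq)
        next
          case False
          hence lt: "cnt a' j < cnt a j" using le' by simp
          have L: "Lj j = cnt a' j" using gr_strict[OF j bj lt] JVj by (simp add: Lj_def)
          define e where "e = int (cnt a j) - int (cnt a' j)"
          have e1: "e \<ge> 1" using lt by (simp add: e_def)
          have sl: "slack j = int m * e - int (cnt a j)"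
            using L P by (simp add: slack_def d_def e_def algebra_simps)
          have me: "int m * e \<ge> int m" using e1 mult_left_mono[of 1 e "int m"] by simp
          have nm: "int (cnt a j) \<le> int m" using mge True by simp
          have "0 \<le> slack j" using sl me nm by simp
          moreover have "ident j" if "slack j = 0"
          proof -
            have "int m * e \<le> int m * 1" using sl that nm by simp
            hence "e \<le> 1" using m0 by (simp add: mult_le_cancel_left)
            hence ee: "e = 1" using e1 by simp
            hence nmm: "cnt a j = m" using sl that by simp
            hence n'p: "cnt a' j = p" using ee p by (simp add: e_def)
            have gp: "gr j p = W" using gr_prev[OF j, of p V] JVj bj nmm p by (simp add: W_def)
            show ?thesis using nmm n'p p gp JVj by (simp add: ident_def \<delta>_def algebra_simps)
          qed
          ultimately show ?thesis by blast
        qed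
      next
        case False
        have P: "Pj j = cnt a j" using PnJV j False .
        have L: "Lj j = cnt a' j"
        proof (cases "cnt a' j = 0")
          case False
          hence pos: "0 < cnt a j" using le' by simp
          hence "gr j (cnt a j) \<le> V" "gr j (cnt a j) \<noteq> V" "b * real (cnt a j) < 1"
            using occ \<open>j \<notin> JV\<close> j by (auto simp: JV_def)
          moreover have "gr j (cnt a' j) \<le> gr j (cnt a j)" using gr_mono[OF j _ le'] calculation by blast
          ultimately show ?thesis by (simp add: Lj_def)
        qed (simp add: Lj_def)
        define e where "e = int (cnt a j) - int (cnt a' j)"
        have e0: "e \<ge> 0" using le' by (simp add: e_def)
        have sl: "slack j = int m * e"
          using L P by (simp add: slack_def d_def e_def algebra_simps)
        have "0 \<le> slack j" using sl e0 by simp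
        moreover have "ident j" if "slack j = 0"
        proof -
          have "e = 0" using sl that m0 by simp
          thus ?thesis by (intro identeq) (simp add: e_def)
        qed
        ultimately show ?thesis by blast
      qed
    qed
    have sd: "(\<Sum>j<N. d j) = 0" using sum_cnt[OF a] sum_cnt[OF a']
      by (simp add: d_def sum_subtractf of_nat_sum[symmetric])
    have "(\<Sum>j<N. slack j) = (1 - int m) * (\<Sum>j<N. d j) - (int (\<Sum>j<N. Lj j) - int (\<Sum>j<N. Pj j))"
      by (simp add: slack_def sum_subtractf sum_distrib_left of_nat_sum)
    also have "\<dots> \<le> 0" using sd cardLP by (simp del: of_nat_sum)
    finally have "(\<Sum>j<N. slack j) \<le> 0" .
    hence "\<forall>j\<in>{..<N}. slack j = 0" using perj
      by (subst sum_nonneg_eq_0_iff[symmetric]) (auto intro: antisym sum_nonneg)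
    hence idall: "\<And>j. j < N \<Longrightarrow> ident j" using perj by auto
    have "(\<Sum>j<N. real (cnt a' j) * gr j (cnt a' j)) - (\<Sum>j<N. real (cnt a j) * gr j (cnt a j))
        = (\<Sum>j<N. \<delta> * (real (cnt a' j) - real (cnt a j)))"
      using idall by (simp add: sum_subtractf[symmetric] ident_def)
    also have "\<dots> = \<delta> * (real (\<Sum>j<N. cnt a' j) - real (\<Sum>j<N. cnt a j))"
      by (simp add: sum_distrib_left[symmetric] sum_subtractf of_nat_sum)
    also have "\<dots> = 0" using sum_cnt[OF a] sum_cnt[OF a'] by simp
    finally have sumeq: "(\<Sum>j<N. real (cnt a' j) * gr j (cnt a' j)) = (\<Sum>j<N. real (cnt a j) * gr j (cnt a j))"
      by simp
    have "(\<Sum>l<M. rc' l) < (\<Sum>l<M. rc l)"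
      by (rule sum_strict_mono_ex1) (use rle l0(1) rlt in auto)
    moreover have "(\<Sum>l<M. rc' l) = (\<Sum>j<N. real (cnt a' j) * gr j (cnt a' j))"
      unfolding rc'_def using fiber_sum[OF a', of "\<lambda>j. gr j (cnt a' j)"] by simp
    moreover have "(\<Sum>l<M. rc l) = (\<Sum>j<N. real (cnt a j) * gr j (cnt a j))"
      unfolding rc_def using fiber_sum[OF a, of "\<lambda>j. gr j (cnt a j)"] by simp
    ultimately show False using sumeq by simp
  qed
qed

end

theorem proposition4:
  fixes h :: "nat \<Rightarrow> nat \<Rightarrow> real" and \<sigma>2 :: real and \<gamma> :: "nat \<Rightarrow> real"
    and M N :: nat and hb :: "nat \<Rightarrow> real" and b :: real
  assumes "M > 0" and "N > 0"
    and "\<forall>i<M. \<forall>j<N. h i j > 0"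
    and "\<sigma>2 > 0"
    and "\<forall>i<M. \<gamma> i > 0"
    and feasible: "\<exists>a\<in>profiles M N. \<forall>j<N. load (beta_of \<gamma>) M a j < 1"
    and sym_h: "\<forall>i<M. \<forall>j<N. h i j = hb j"
    and sym_beta: "\<forall>i<M. beta_of \<gamma> i = b"
  shows "{a. steady_state h \<sigma>2 (beta_of \<gamma>) M N a}
       = {a. nash_eq h \<sigma>2 (beta_of \<gamma>) M N a \<and> pareto_efficient h \<sigma>2 (beta_of \<gamma>) M N a}"
proof -
  interpret symsys h \<sigma>2 \<gamma> M N hb b using assms by unfold_locales
  show ?thesis using steady_ne steady_pe ne_pe_steady by blast
qed

end
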